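(* Let $G$ be a connected weighted multigraph on the vertex set $V$, $|V|=n\ge2$, with positive edge weights, weighted adjacency matrix $A$ and Perron vector $p$. Let $p'=\sqrt n\,p/\|p\|_2$ and $P'=\operatorname{diag}p'$, and let $G'$ be the weighted graph on $V$ whose weighted adjacency matrix is $P'AP'$. Then for all $i,j\in V$, the long walk distance $d^{LW}(i,j)$ in $G$ equals the resistance distance between $i$ and $j$ in $G'$.
   Context: Loops and multiple edges are allowed; $A=(a_{ij})$ has $a_{ij}$ equal to the sum of weights of the edges joining $i$ and $j$. $\rho$ is the spectral radius of $A$ and the Perron vector $p$ is the positive eigenvector of $A$ for $\rho$ with entries summing to 1. The long walk distance is $d^{LW}(i,j)=\lim_{\alpha\to\infty}\theta\bigl(\tfrac12(\ln r_{ii}+\ln r_{jj})-\ln r_{ij}\bigr)$, where $(r_{ij})=(I-tA)^{-1}$, $t=(\rho+\alpha^{-1})^{-1}$, $\theta=\ln(e+\alpha^{2/n})\frac{\alpha-1}{\ln\alpha}$. For a graph with weighted adjacency matrix $B$, the Laplacian is $L=\operatorname{diag}(B\mathbf 1)-B$ and the resistance distance is $(e_i-e_j)^{\mathsf T}L^{+}(e_i-e_j)$, $L^+$ the Moore–Penrose inverse. *)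

theory Defs
  imports "HOL-Analysis.Analysis"
begin

text \<open>Vertices are the elements of a finite type 'n; a weighted multigraph (loops and
multiple edges allowed, positive weights) is represented by its weighted adjacency matrix,
which is exactly a symmetric matrix with nonnegative real entries.\<close>

definition weighted_adjacency :: "real^'n^'n \<Rightarrow> bool" where
  "weighted_adjacency A \<longleftrightarrow> transpose A = A \<and> (\<forall>i j. A$i$j \<ge> 0)"

definition connected_graph :: "real^'n^'n \<Rightarrow> bool" where
  "connected_graph A \<longleftrightarrow> (\<forall>i j. (i, j) \<in> {(k, l). A$k$l > 0}\<^sup>*)"

definition spectral_radius :: "real^'n^'n \<Rightarrow> real" where
  "spectral_radius A = Sup {cmod c | c. \<exists>v :: complex^'n. v \<noteq> 0 \<and>
      (\<chi> i j. complex_of_real (A$i$j)) *v v = c *s v}"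

definition perron_vector :: "real^'n^'n \<Rightarrow> real^'n" where
  "perron_vector A = (THE p. (\<forall>i. p$i > 0) \<and> A *v p = spectral_radius A *\<^sub>R p
       \<and> sum (\<lambda>i. p$i) UNIV = 1)"

definition long_walk_approx :: "real^'n^'n \<Rightarrow> 'n \<Rightarrow> 'n \<Rightarrow> real \<Rightarrow> real" where
  "long_walk_approx A i j a =
     (let t = inverse (spectral_radius A + inverse a);
          r = matrix_inv (mat 1 - t *\<^sub>R A);
          th = ln (exp 1 + a powr (2 / real CARD('n))) * (a - 1) / ln a
      in th * ((ln (r$i$i) + ln (r$j$j)) / 2 - ln (r$i$j)))"

definition long_walk_dist :: "real^'n^'n \<Rightarrow> 'n \<Rightarrow> 'n \<Rightarrow> real" where
  "long_walk_dist A i j = Lim at_top (long_walk_approx A i j)"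

definition moore_penrose :: "real^'n^'n \<Rightarrow> real^'n^'n" where
  "moore_penrose L = (THE X. L ** X ** L = L \<and> X ** L ** X = X \<and>
       transpose (L ** X) = L ** X \<and> transpose (X ** L) = X ** L)"

definition laplacian :: "real^'n^'n \<Rightarrow> real^'n^'n" where
  "laplacian B = (\<chi> i j. (if i = j then (\<Sum>k\<in>UNIV. B$i$k) else 0) - B$i$j)"

definition resistance_dist :: "real^'n^'n \<Rightarrow> 'n \<Rightarrow> 'n \<Rightarrow> real" where
  "resistance_dist B i j =
     (let e = (\<lambda>k. axis k (1::real)) in (e i - e j) \<bullet> (moore_penrose (laplacian B) *v (e i - e j)))"

end

theory Submission
  imports Defs "HOL-Real_Asymp.Real_Asymp"
begin
lemma sym_dot:
  fixes S :: "real^'n^'n"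
  assumes "transpose S = S"
  shows "x \<bullet> (S *v y) = y \<bullet> (S *v x)"
  by (metis assms dot_lmul_matrix inner_commute transpose_matrix_vector)

lemma psd_zero:
  fixes S :: "real^'n^'n"
  assumes sym: "transpose S = S" and psd: "\<And>z. 0 \<le> z \<bullet> (S *v z)"
    and x0: "x \<bullet> (S *v x) = 0"
  shows "S *v x = 0"
proof (rule ccontr)
  assume ne: "S *v x \<noteq> 0"
  define y where "y = S *v x"
  define a where "a = y \<bullet> y"
  define b where "b = y \<bullet> (S *v y)"
  have a: "a > 0" using ne by (simp add: a_def y_def)
  have b: "b \<ge> 0" using psd by (simp add: b_def)
  define t where "t = - a / (b + 1)"
  have "0 \<le> (x + t *\<^sub>R y) \<bullet> (S *v (x + t *\<^sub>R y))" by (rule psd)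
  also have "\<dots> = x \<bullet> (S *v x) + 2 * t * (y \<bullet> (S *v x)) + t^2 * b"
    using sym_dot[OF sym, of x y]
    by (simp add: algebra_simps inner_add_left inner_add_right b_def power2_eq_square)
  also have "\<dots> = 2 * t * a + t^2 * b" using x0 by (simp add: a_def y_def)
  also have "\<dots> = t * (2 * a + t * b)" by (simp add: algebra_simps power2_eq_square)
  also have "\<dots> < 0"
  proof (rule mult_neg_pos)
    show "t < 0" using a b by (simp add: t_def)
    have "t * b = - a * (b / (b + 1))" by (simp add: t_def)
    moreover have "b / (b+1) \<le> 1" using b by simp
    ultimately have "t * b \<ge> - a" using a
      by (metis mult_le_cancel_left_pos mult_minus_left mult.right_neutral neg_le_iff_le)
    then show "0 < 2 * a + t * b" using a by simp
  qed
  finally show False by simp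
qed

lemma quad_form:
  fixes A :: "real^'n^'n"
  shows "x \<bullet> (A *v y) = (\<Sum>k\<in>UNIV. \<Sum>l\<in>UNIV. x$k * A$k$l * y$l)"
  by (simp add: inner_vec_def matrix_vector_mult_def sum_distrib_left mult.assoc)

locale psetup =
  fixes A :: "real^'n^'n"
  assumes symA: "transpose A = A" and nonneg: "\<And>i j. A$i$j \<ge> 0"
    and conn: "\<And>i j. (i,j) \<in> {(k,l). A$k$l > 0}\<^sup>*"
begin

lemma Aij_sym: "A$i$j = A$j$i"
  using symA by (metis transpose_def vec_lambda_beta)

lemma rayleigh_exists:
  obtains u :: "real^'n" where "norm u = 1" "\<And>x. x \<bullet> (A *v x) \<le> (u \<bullet> (A *v u)) * (x \<bullet> x)"
proof -
  have "compact (sphere (0::real^'n) 1)" by simp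
  moreover have "sphere (0::real^'n) 1 \<noteq> {}" by simp
  moreover have "continuous_on (sphere 0 1) (\<lambda>x::real^'n. x \<bullet> (A *v x))"
    by (intro continuous_intros linear_continuous_on bounded_linear_intros) 
       (simp add: linear_linear)
  ultimately obtain u where u: "u \<in> sphere 0 1" and umax: "\<And>y. y \<in> sphere 0 1 \<Longrightarrow> y \<bullet> (A *v y) \<le> u \<bullet> (A *v u)"
    using continuous_attains_sup by metis
  have "x \<bullet> (A *v x) \<le> (u \<bullet> (A *v u)) * (x \<bullet> x)" for x
  proof (cases "x = 0")
    case True then show ?thesis by simp
  next
    case False
    define y where "y = (1 / norm x) *\<^sub>R x"
    have "y \<in> sphere 0 1" using False by (simp add: y_def)
    then have "y \<bullet> (A *v y) \<le> u \<bullet> (A *v u)" by (rule umax)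
    moreover have "y \<bullet> (A *v y) = (x \<bullet> (A *v x)) / (x \<bullet> x)"
      using False by (simp add: y_def matrix_vector_mult_scaleR power2_norm_eq_inner[symmetric] power2_eq_square)
    moreover have "x \<bullet> x > 0" using False by simp
    ultimately show ?thesis by (simp add: divide_le_eq)
  qed
  moreover have "norm u = 1" using u by simp
  ultimately show ?thesis using that by blast
qed

end

lemma smat_mult: "((c::real) *\<^sub>R (X::real^'n^'m)) *v x = c *\<^sub>R (X *v x)"
  by (simp add: vec_eq_iff matrix_vector_mult_def scaleR_vec_def sum_distrib_left mult.assoc)

context psetup begin

lemma pos_eigen:
  assumes y0: "\<And>k. y$k \<ge> 0" and ey: "A *v y = c *\<^sub>R y" and yne: "y \<noteq> 0"
  shows "y$k > 0"
proof (rule ccontr)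
  assume "\<not> y$k > 0"
  then have yk: "y$k = 0" using y0[of k] by simp
  have nbz: "y$l = 0" if "y$m = 0" "A$m$l > 0" for m l
  proof -
    have "(A *v y)$m = c * y$m" using ey by simp
    then have "(\<Sum>j\<in>UNIV. A$m$j * y$j) = 0"
      using that(1) by (simp add: matrix_vector_mult_def)
    moreover have "\<forall>j\<in>UNIV. A$m$j * y$j \<ge> 0" using nonneg y0 by simp
    ultimately have "A$m$l * y$l = 0" by (simp add: sum_nonneg_eq_0_iff)
    then show ?thesis using that(2) by simp
  qed
  have "y$l = 0" for l
  proof -
    have "(k,l) \<in> {(a,b). A$a$b > 0}\<^sup>*" by (rule conn)
    then show ?thesis
    proof (induction rule: rtrancl_induct)
      case base then show ?case by (rule yk)
    next
      case (step b c) then show ?case using nbz by blast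
    qed
  qed
  then have "y = 0" by (simp add: vec_eq_iff)
  then show False using yne by simp
qed

lemma simple_eigen:
  assumes q0: "\<And>k. q$k > 0" and eq: "A *v q = r *\<^sub>R q" and ey: "A *v y = r *\<^sub>R y"
  shows "\<exists>c. y = c *\<^sub>R q"
proof -
  define c where "c = Min ((\<lambda>k. y$k / q$k) ` UNIV)"
  have "c \<in> (\<lambda>k. y$k / q$k) ` UNIV" unfolding c_def by (rule Min_in) auto
  then obtain k0 where k0: "c = y$k0 / q$k0" by blast
  have cle: "c \<le> y$k / q$k" for k unfolding c_def by simp
  define z where "z = y - c *\<^sub>R q"
  have z0: "z$k \<ge> 0" for k
    using cle[of k] q0[of k] by (simp add: z_def pos_le_divide_eq mult.commute)
  have ez: "A *v z = r *\<^sub>R z" using eq ey by (simp add: z_def algebra_simps)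
  have "z$k0 = 0" using k0 q0[of k0] by (simp add: z_def)
  then have "z = 0" using pos_eigen[OF z0 ez, of k0] by (cases "z = 0") auto
  then show ?thesis unfolding z_def by auto
qed

lemma perron_exists:
  "\<exists>r w. (\<forall>k. w$k > 0) \<and> A *v w = r *\<^sub>R w \<and> (\<forall>x. x \<bullet> (A *v x) \<le> r * (x \<bullet> x)) \<and> r \<ge> 0"
proof -
  obtain u where u1: "norm u = 1" and umax: "\<And>x. x \<bullet> (A *v x) \<le> (u \<bullet> (A *v u)) * (x \<bullet> x)"
    using rayleigh_exists by blast
  define r where "r = u \<bullet> (A *v u)"
  define w where "w = (\<chi> k. \<bar>u$k\<bar>)"
  have uu: "u \<bullet> u = 1" using u1 by (metis power2_norm_eq_inner power_one)
  have ww: "w \<bullet> w = 1"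
    using uu unfolding inner_vec_def by (simp add: w_def abs_mult_self_eq)
  have "r \<le> w \<bullet> (A *v w)"
    unfolding r_def quad_form
  proof (intro sum_mono)
    fix k l
    show "u$k * A$k$l * u$l \<le> w$k * A$k$l * w$l"
      using nonneg[of k l] by (simp add: w_def) (metis abs_ge_self abs_mult abs_of_nonneg)
  qed
  moreover have "w \<bullet> (A *v w) \<le> r" using umax[of w] ww by (simp add: r_def)
  ultimately have wr: "w \<bullet> (A *v w) = r" by simp
  define S where "S = r *\<^sub>R mat 1 - A"
  have Sv: "S *v x = r *\<^sub>R x - A *v x" for x
    by (simp add: S_def matrix_vector_mult_diff_rdistrib smat_mult)
  have symS: "transpose S = S"
    using symA by (simp add: S_def transpose_def vec_eq_iff mat_def)
  have psdS: "0 \<le> x \<bullet> (S *v x)" for x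
    using umax[of x] by (simp add: Sv inner_diff_right r_def)
  have "w \<bullet> (S *v w) = 0" using wr ww by (simp add: Sv inner_diff_right)
  then have "S *v w = 0" using psd_zero[OF symS psdS] by blast
  then have ew: "A *v w = r *\<^sub>R w" by (simp add: Sv)
  have w0: "w$k \<ge> 0" for k by (simp add: w_def)
  have wne: "w \<noteq> 0" using ww by auto
  have wpos: "\<forall>k. w$k > 0" using pos_eigen[OF w0 ew wne] by blast
  have "r \<ge> 0" unfolding wr[symmetric] quad_form
    using nonneg w0 by (intro sum_nonneg) simp
  then show ?thesis using wpos ew umax unfolding r_def[symmetric] by blast
qed

end

context psetup begin

lemma cplx_eig_bound:
  assumes ray: "\<And>x. x \<bullet> (A *v x) \<le> r * (x \<bullet> x)"
    and vne: "v \<noteq> 0" and ev: "(\<chi> i j. complex_of_real (A$i$j)) *v v = c *s v"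
  shows "cmod c \<le> r"
proof -
  define a where "a = (\<chi> k. cmod (v$k))"
  have comp: "(\<Sum>l\<in>UNIV. complex_of_real (A$k$l) * v$l) = c * v$k" for k
  proof -
    have "((\<chi> i j. complex_of_real (A$i$j)) *v v)$k = (c *s v)$k" using ev by simp
    then show ?thesis by (simp add: matrix_vector_mult_def)
  qed
  have le: "cmod c * a$k \<le> (A *v a)$k" for k
  proof -
    have "cmod c * a$k = cmod (\<Sum>l\<in>UNIV. complex_of_real (A$k$l) * v$l)"
      by (simp add: comp a_def norm_mult)
    also have "\<dots> \<le> (\<Sum>l\<in>UNIV. cmod (complex_of_real (A$k$l) * v$l))" by (rule norm_sum)
    also have "\<dots> = (A *v a)$k"
      using nonneg by (simp add: matrix_vector_mult_def a_def norm_mult)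
    finally show ?thesis .
  qed
  have "cmod c * (a \<bullet> a) = (\<Sum>k\<in>UNIV. a$k * (cmod c * a$k))"
    by (simp add: inner_vec_def sum_distrib_left mult_ac)
  also have "\<dots> \<le> (\<Sum>k\<in>UNIV. a$k * (A *v a)$k)"
    by (intro sum_mono mult_left_mono le) (simp add: a_def)
  also have "\<dots> = a \<bullet> (A *v a)" by (simp add: inner_vec_def)
  also have "\<dots> \<le> r * (a \<bullet> a)" by (rule ray)
  finally have *: "cmod c * (a \<bullet> a) \<le> r * (a \<bullet> a)" .
  obtain k where "v$k \<noteq> 0" using vne by (metis vec_eq_iff zero_index)
  then have "a \<noteq> 0" by (metis a_def norm_eq_zero vec_lambda_beta zero_index)
  then have "a \<bullet> a > 0" by simp
  with * show ?thesis by simp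
qed

lemma spectral_radius_eq:
  assumes wpos: "\<And>k. w$k > 0" and ew: "A *v w = r *\<^sub>R w"
    and ray: "\<And>x. x \<bullet> (A *v x) \<le> r * (x \<bullet> x)" and r0: "r \<ge> 0"
  shows "spectral_radius A = r"
  unfolding spectral_radius_def
proof (rule cSup_eq_maximum)
  define v where "v = (\<chi> k. complex_of_real (w$k))"
  have "v \<noteq> 0" using wpos by (metis v_def less_irrefl of_real_eq_0_iff vec_lambda_beta zero_index)
  moreover have "(\<chi> i j. complex_of_real (A$i$j)) *v v = complex_of_real r *s v"
  proof -
    have "(\<Sum>j\<in>UNIV. A$k$j * w$j) = r * w$k" for k
    proof -
      have "(A *v w)$k = (r *\<^sub>R w)$k" using ew by simp
      then show ?thesis by (simp add: matrix_vector_mult_def)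
    qed
    then show ?thesis
      by (simp add: vec_eq_iff matrix_vector_mult_def v_def flip: of_real_mult of_real_sum)
  qed
  ultimately show "r \<in> {cmod c |c. \<exists>v. v \<noteq> 0 \<and> (\<chi> i j. complex_of_real (A$i$j)) *v v = c *s v}"
    using r0 by (intro CollectI exI[of _ "complex_of_real r"]) auto
next
  fix x assume "x \<in> {cmod c |c. \<exists>v :: complex^'n. v \<noteq> 0 \<and> (\<chi> i j. complex_of_real (A$i$j)) *v v = c *s v}"
  then show "x \<le> r" using cplx_eig_bound[OF ray] by blast
qed

lemma perron_vector_eq:
  assumes wpos: "\<And>k. w$k > 0" and ew: "A *v w = r *\<^sub>R w"
    and ray: "\<And>x. x \<bullet> (A *v x) \<le> r * (x \<bullet> x)" and r0: "r \<ge> 0"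
  shows "perron_vector A = (1 / sum (\<lambda>i. w$i) UNIV) *\<^sub>R w"
  unfolding perron_vector_def spectral_radius_eq[OF assms]
proof (rule the_equality)
  have sp: "sum (\<lambda>i. w$i) UNIV > 0" using wpos by (simp add: sum_pos)
  show "(\<forall>i. ((1 / sum (\<lambda>i. w$i) UNIV) *\<^sub>R w)$i > 0) \<and>
    A *v ((1 / sum (\<lambda>i. w$i) UNIV) *\<^sub>R w) = r *\<^sub>R ((1 / sum (\<lambda>i. w$i) UNIV) *\<^sub>R w) \<and>
    sum (\<lambda>i. ((1 / sum (\<lambda>i. w$i) UNIV) *\<^sub>R w)$i) UNIV = 1"
    using sp wpos ew by (simp add: matrix_vector_mult_scaleR sum_divide_distrib[symmetric])
next
  fix p assume p: "(\<forall>i. p$i > 0) \<and> A *v p = r *\<^sub>R p \<and> sum (\<lambda>i. p$i) UNIV = 1"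
  then obtain c where c: "p = c *\<^sub>R w" using simple_eigen[OF wpos ew] by blast
  then have "c * sum (\<lambda>i. w$i) UNIV = 1" using p by (simp add: sum_distrib_left)
  moreover have "sum (\<lambda>i. w$i) UNIV \<noteq> 0" using calculation by auto
  ultimately have "c = 1 / sum (\<lambda>i. w$i) UNIV" by (simp add: field_simps)
  then show "p = (1 / sum (\<lambda>i. w$i) UNIV) *\<^sub>R w" using c by simp
qed

end

lemma inv_unique:
  fixes X Y :: "real^'n^'n"
  assumes "X ** Y = mat 1"
  shows "matrix_inv X = Y"
proof -
  have YX: "Y ** X = mat 1" using assms matrix_left_right_inverse by blast
  define Z where "Z = matrix_inv X"
  have "X ** Z = mat 1 \<and> Z ** X = mat 1"
    unfolding Z_def matrix_inv_def by (rule someI[of _ Y]) (use assms YX in simp)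
  then have "Z = (Y ** X) ** Z" using YX by simp
  also have "\<dots> = Y" using \<open>X ** Z = mat 1 \<and> Z ** X = mat 1\<close> by (simp flip: matrix_mul_assoc)
  finally show ?thesis by (simp add: Z_def)
qed

lemma inv_from_ker:
  fixes X :: "real^'n^'n"
  assumes "\<And>x. X *v x = 0 \<Longrightarrow> x = 0"
  shows "X ** matrix_inv X = mat 1" "matrix_inv X ** X = mat 1" "invertible X"
proof -
  have inv: "invertible X" using assms invertible_left_inverse matrix_left_invertible_ker by blast
  then obtain Y where "X ** Y = mat 1" unfolding invertible_def by blast
  then have "matrix_inv X = Y" by (rule inv_unique)
  then show "X ** matrix_inv X = mat 1" "matrix_inv X ** X = mat 1"
    using \<open>X ** Y = mat 1\<close> matrix_left_right_inverse by auto
  show "invertible X" by (rule inv)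
qed

lemma inv_vec:
  fixes X :: "real^'n^'n"
  assumes "X ** Y = mat 1"
  shows "X *v (Y *v x) = x" "Y *v (X *v x) = x"
  using assms matrix_left_right_inverse[of X Y]
  by (simp_all add: matrix_vector_mul_assoc)

lemma inv_sym:
  fixes X :: "real^'n^'n"
  assumes "transpose X = X" "X ** Y = mat 1"
  shows "transpose Y = Y"
proof -
  have YX: "Y ** X = mat 1" using assms matrix_left_right_inverse by blast
  have "transpose Y ** X = mat 1"
    using assms(2) by (metis assms(1) matrix_transpose_mul transpose_mat)
  then have "transpose Y = transpose Y ** (X ** Y)" using assms by simp
  also have "\<dots> = Y" using \<open>transpose Y ** X = mat 1\<close> by (simp add: matrix_mul_assoc)
  finally show ?thesis .
qed

lemma matrix_eq_vec: "(X::real^'n^'m) = Y \<longleftrightarrow> (\<forall>x. X *v x = Y *v x)"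
  by (metis matrix_eq)

lemma mat_mult_mat1_iff: "(X::real^'n^'n) ** Y = mat 1 \<longleftrightarrow> (\<forall>x. X *v (Y *v x) = x)"
  by (simp add: matrix_eq_vec matrix_vector_mul_assoc)

locale psetup2 = psetup +
  fixes rho :: real and q :: "real^'n"
  assumes qpos: "\<And>k. q$k > 0" and eq: "A *v q = rho *\<^sub>R q" and qq: "q \<bullet> q = 1"
    and ray: "\<And>x. x \<bullet> (A *v x) \<le> rho * (x \<bullet> x)"
begin

definition "M = rho *\<^sub>R mat 1 - A"
definition "P = (\<chi> i j. q$i * q$j :: real^'n^'n)"
definition "N e = M + P + e *\<^sub>R mat 1"

lemma Mv: "M *v x = rho *\<^sub>R x - A *v x"
  by (simp add: M_def matrix_vector_mult_diff_rdistrib smat_mult)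

lemma Pv: "P *v x = (q \<bullet> x) *\<^sub>R q"
  by (simp add: P_def vec_eq_iff matrix_vector_mult_def inner_vec_def sum_distrib_left mult_ac)

lemma Nv: "N e *v x = M *v x + (q \<bullet> x) *\<^sub>R q + e *\<^sub>R x"
  by (simp add: N_def matrix_vector_mult_add_rdistrib smat_mult Pv)

lemma symM: "transpose M = M"
  using symA by (simp add: M_def transpose_def vec_eq_iff mat_def)

lemma symP: "transpose P = P"
  by (simp add: P_def transpose_def vec_eq_iff mult.commute)

lemma symN: "transpose (N e) = N e"
  using symM symP by (simp add: N_def transpose_def vec_eq_iff mat_def)

lemma psdM: "0 \<le> x \<bullet> (M *v x)"
  using ray[of x] by (simp add: Mv inner_diff_right)

lemma Mq: "M *v q = 0" by (simp add: Mv eq)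

lemma qM: "q \<bullet> (M *v x) = 0"
  using sym_dot[OF symM, of q x] Mq by simp

lemma kerM: assumes "M *v x = 0" shows "\<exists>c. x = c *\<^sub>R q"
  using assms simple_eigen[OF qpos eq, of x] by (simp add: Mv)

lemma kerN: assumes e: "e \<ge> 0" and "N e *v x = 0" shows "x = 0"
proof -
  have "0 = x \<bullet> (N e *v x)" using assms by simp
  also have "\<dots> = x \<bullet> (M *v x) + (q \<bullet> x)^2 + e * (x \<bullet> x)"
    by (simp add: Nv inner_add_right power2_eq_square inner_commute)
  finally have s: "x \<bullet> (M *v x) + (q \<bullet> x)^2 + e * (x \<bullet> x) = 0" by simp
  have "x \<bullet> (M *v x) = 0" "(q \<bullet> x)^2 = 0"
    using s psdM[of x] e by (smt (verit) inner_ge_zero mult_nonneg_nonneg zero_le_power2)+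
  then have "M *v x = 0" "q \<bullet> x = 0" using psd_zero[OF symM psdM] by auto
  then obtain c where "x = c *\<^sub>R q" using kerM by blast
  with \<open>q \<bullet> x = 0\<close> qq show ?thesis by simp
qed

definition "K e = matrix_inv (N e)"

lemma NK: "e \<ge> 0 \<Longrightarrow> N e ** K e = mat 1"
  unfolding K_def using inv_from_ker(1)[of "N e"] kerN by blast

lemma symK: "e \<ge> 0 \<Longrightarrow> transpose (K e) = K e"
  using inv_sym[OF symN NK] by blast

lemma Nq: "N e *v q = (1 + e) *\<^sub>R q"
  by (simp add: Nv Mq qq algebra_simps)

lemma Kq: assumes "e \<ge> 0" shows "K e *v q = (1 / (1 + e)) *\<^sub>R q"
proof -
  have "K e *v (N e *v q) = q" using inv_vec(2)[OF NK[OF assms]] .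
  then have "(1 + e) *\<^sub>R (K e *v q) = q" by (simp add: Nq matrix_vector_mult_scaleR)
  then show ?thesis using assms by (metis add_pos_nonneg less_numeral_extra(1) scaleR_scaleR
     nonzero_eq_divide_eq order_less_irrefl real_vector.scale_one div_by_1 times_divide_eq_left)
qed

lemma qK: assumes "e \<ge> 0" shows "q \<bullet> (K e *v x) = (q \<bullet> x) / (1 + e)"
  using sym_dot[OF symK[OF assms], of q x] Kq[OF assms] by (simp add: inner_commute)

definition "W e = K e - (1 / (1 + e)) *\<^sub>R P"

lemma Wv: "W e *v x = K e *v x - ((q \<bullet> x) / (1 + e)) *\<^sub>R q"
  by (simp add: W_def matrix_vector_mult_diff_rdistrib smat_mult Pv)

lemma resolvent:
  assumes e: "e > 0"
  shows "(M + e *\<^sub>R mat 1) ** ((1 / e) *\<^sub>R P + W e) = mat 1"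
proof (unfold mat_mult_mat1_iff, intro allI)
  fix x
  have Me: "(M + e *\<^sub>R mat 1) *v y = M *v y + e *\<^sub>R y" for y
    by (simp add: matrix_vector_mult_add_rdistrib smat_mult)
  have NKx: "N e *v (K e *v x) = x" using inv_vec(1)[OF NK] e by simp
  have MK: "M *v (K e *v x) + e *\<^sub>R (K e *v x) = x - ((q \<bullet> x) / (1 + e)) *\<^sub>R q"
    using NKx qK[of e x] e by (simp add: Nv algebra_simps)
  have "(M + e *\<^sub>R mat 1) *v (((1 / e) *\<^sub>R P + W e) *v x)
     = (q \<bullet> x) *\<^sub>R q + (x - ((q \<bullet> x) / (1 + e)) *\<^sub>R q) - (e * ((q \<bullet> x) / (1 + e))) *\<^sub>R q"
    using e MK by (simp add: Me matrix_vector_mult_add_rdistrib smat_mult Pv Wv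
        matrix_vector_mult_diff_distrib matrix_vector_mult_scaleR Mq algebra_simps)
  also have "\<dots> = x + ((q \<bullet> x) - (q \<bullet> x) / (1 + e) - e * ((q \<bullet> x) / (1 + e))) *\<^sub>R q"
    by (simp add: algebra_simps)
  also have "(q \<bullet> x) - (q \<bullet> x) / (1 + e) - e * ((q \<bullet> x) / (1 + e)) = 0"
      using e by (simp add: field_simps)
  finally have "(M + e *\<^sub>R mat 1) *v (((1 / e) *\<^sub>R P + W e) *v x) = x" by simp
  then show "(M + e *\<^sub>R mat 1) *v (((1 / e) *\<^sub>R P + W e) *v x) = x" .
qed

end

lemma det_tendsto:
  fixes G :: "'a \<Rightarrow> real^'n^'n"
  assumes "\<And>i j. ((\<lambda>x. G x $ i $ j) \<longlongrightarrow> X $ i $ j) F"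
  shows "((\<lambda>x. det (G x)) \<longlongrightarrow> det X) F"
  unfolding det_def by (intro tendsto_intros assms)

lemma inv_entry:
  fixes Y :: "real^'n^'n"
  assumes d: "det Y \<noteq> 0"
  shows "matrix_inv Y $ i $ j = det (\<chi> a b. if b = i then axis j 1 $ a else Y$a$b) / det Y"
proof -
  obtain Y' where Y': "Y ** Y' = mat 1" using d invertible_det_nz invertible_def by blast
  have inv: "matrix_inv Y = Y'" using Y' by (rule inv_unique)
  have "Y *v (Y' *v axis j 1) = axis j 1" using inv_vec(1)[OF Y'] .
  then have "Y' *v axis j 1 = (\<chi> k. det (\<chi> a b. if b = k then axis j 1 $ a else Y$a$b) / det Y)"
    using cramer[OF d] by blast
  then have "(Y' *v axis j 1) $ i = det (\<chi> a b. if b = i then axis j 1 $ a else Y$a$b) / det Y"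
    by simp
  moreover have "(Y' *v axis j 1) $ i = Y' $ i $ j"
  proof -
    have "(Y' *v axis j 1) $ i = (\<Sum>k\<in>UNIV. if k = j then Y' $ i $ k else 0)"
      unfolding matrix_vector_mult_def axis_def by (simp add: if_distrib cong: if_cong)
    then show ?thesis by simp
  qed
  ultimately show ?thesis using inv by simp
qed

lemma inv_tendsto:
  fixes G :: "'a \<Rightarrow> real^'n^'n"
  assumes lim: "\<And>i j. ((\<lambda>x. G x $ i $ j) \<longlongrightarrow> X $ i $ j) F" and d: "det X \<noteq> 0"
  shows "((\<lambda>x. matrix_inv (G x) $ i $ j) \<longlongrightarrow> matrix_inv X $ i $ j) F"
proof -
  have dl: "((\<lambda>x. det (G x)) \<longlongrightarrow> det X) F" by (rule det_tendsto[OF lim])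
  have ev: "eventually (\<lambda>x. det (G x) \<noteq> 0) F" by (rule tendsto_imp_eventually_ne[OF dl d])
  have num: "((\<lambda>x. det (\<chi> a b. if b = i then axis j 1 $ a else G x $a$b))
      \<longlongrightarrow> det (\<chi> a b. if b = i then axis j 1 $ a else X$a$b)) F"
    by (rule det_tendsto) (simp add: lim)
  have "((\<lambda>x. det (\<chi> a b. if b = i then axis j 1 $ a else G x $a$b) / det (G x))
      \<longlongrightarrow> det (\<chi> a b. if b = i then axis j 1 $ a else X$a$b) / det X) F"
    by (rule tendsto_divide[OF num dl d])
  then have "((\<lambda>x. det (\<chi> a b. if b = i then axis j 1 $ a else G x $a$b) / det (G x))
      \<longlongrightarrow> matrix_inv X $ i $ j) F" using inv_entry[OF d] by simp
  then show ?thesis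
    by (rule Lim_transform_eventually) (use ev in \<open>auto elim!: eventually_mono simp: inv_entry\<close>)
qed

context psetup2 begin

lemma W_tendsto:
  "((\<lambda>a. W (1 / a) $ i $ j) \<longlongrightarrow> W 0 $ i $ j) at_top"
proof -
  have e0: "((\<lambda>a::real. 1 / a) \<longlongrightarrow> 0) at_top" by real_asymp
  have Nlim: "((\<lambda>a. N (1 / a) $ k $ l) \<longlongrightarrow> N 0 $ k $ l) at_top" for k l
  proof -
    have eqn: "N e $ k $ l = (M+P)$k$l + e * (mat 1 :: real^'n^'n)$k$l" for e by (simp add: N_def)
    show ?thesis unfolding eqn
      using tendsto_add[OF tendsto_const tendsto_mult[OF e0 tendsto_const], of "(M+P)$k$l" "(mat 1 :: real^'n^'n)$k$l"]
      by simp
  qed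
  have "det (N 0) \<noteq> 0"
    using inv_from_ker(3)[of "N 0"] kerN[of 0] invertible_det_nz by auto
  then have Klim: "((\<lambda>a. K (1 / a) $ i $ j) \<longlongrightarrow> K 0 $ i $ j) at_top"
    unfolding K_def by (rule inv_tendsto[OF Nlim])
  have c1: "((\<lambda>a::real. 1 / (1 + 1 / a)) \<longlongrightarrow> 1) at_top" by real_asymp
  have eqn: "W e $ i $ j = K e $ i $ j - (1 / (1 + e)) * P $ i $ j" for e by (simp add: W_def)
  show ?thesis unfolding eqn
    using tendsto_diff[OF Klim tendsto_mult[OF c1 tendsto_const], of "P$i$j"] by simp
qed

end

lemma log_lim:
  fixes u :: "real \<Rightarrow> real"
  assumes a: "a > 0" and u: "(u \<longlongrightarrow> u0) at_top"
  shows "((\<lambda>x. x * (ln (a + u x / x) - ln a)) \<longlongrightarrow> u0 / a) at_top"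
proof -
  define y where "y x = u x / (x * a)" for x
  have ia: "((\<lambda>x::real. 1 / (x * a)) \<longlongrightarrow> 0) at_top" using a by real_asymp
  have y0: "(y \<longlongrightarrow> 0) at_top"
    using tendsto_mult[OF u ia] unfolding y_def[abs_def] by simp
  have e1: "eventually (\<lambda>x. \<bar>y x\<bar> < 1/2) at_top"
    using y0[unfolded tendsto_iff, rule_format, of "1/2"] by simp
  have ev: "eventually (\<lambda>x. x > 0 \<and> \<bar>y x\<bar> < 1/2) at_top"
    using eventually_conj[OF eventually_gt_at_top[of 0] e1] by simp
  have eq: "x * (ln (a + u x / x) - ln a) = x * ln (1 + y x)" if "x > 0" "\<bar>y x\<bar> < 1/2" for x
  proof -
    have "a + u x / x = a * (1 + y x)" using a that by (simp add: y_def field_simps)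
    moreover have "1 + y x > 0" using that by simp
    ultimately show ?thesis using a by (simp add: ln_mult)
  qed
  have up: "x * ln (1 + y x) \<le> u x / a" if "x > 0" "\<bar>y x\<bar> < 1/2" for x
  proof -
    have "ln (1 + y x) \<le> y x" using that ln_le_minus_one[of "1 + y x"] by simp
    then have "x * ln (1 + y x) \<le> x * y x" using that by (simp add: mult_left_mono)
    also have "x * y x = u x / a" using that a by (simp add: y_def field_simps)
    finally show ?thesis .
  qed
  have lo: "(u x / a) / (1 + y x) \<le> x * ln (1 + y x)" if "x > 0" "\<bar>y x\<bar> < 1/2" for x
  proof -
    have p: "1 + y x > 0" using that by simp
    have "ln (1 / (1 + y x)) \<le> 1 / (1 + y x) - 1" using p ln_le_minus_one[of "1 / (1 + y x)"] by simp
    then have "- ln (1 + y x) \<le> 1 / (1 + y x) - 1" using p by (simp add: ln_div)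
    then have "y x / (1 + y x) \<le> ln (1 + y x)" using p by (simp add: field_simps)
    then have "x * (y x / (1 + y x)) \<le> x * ln (1 + y x)" using that(1) by (intro mult_left_mono) auto
    also have "x * (y x / (1 + y x)) = (u x / a) / (1 + y x)" using that a by (simp add: y_def field_simps)
    finally show ?thesis .
  qed
  have L1: "((\<lambda>x. (u x / a) / (1 + y x)) \<longlongrightarrow> u0 / a) at_top"
    using tendsto_divide[OF tendsto_divide[OF u tendsto_const] tendsto_add[OF tendsto_const y0], of a 1] a
    by simp
  have L2: "((\<lambda>x. u x / a) \<longlongrightarrow> u0 / a) at_top"
    using tendsto_divide[OF u tendsto_const] a by simp
  have "((\<lambda>x. x * ln (1 + y x)) \<longlongrightarrow> u0 / a) at_top"
    by (rule tendsto_sandwich[OF _ _ L1 L2]) (use ev lo up in \<open>auto elim!: eventually_mono\<close>)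
  then show ?thesis
    by (rule Lim_transform_eventually) (use ev eq in \<open>auto elim!: eventually_mono\<close>)
qed

lemma theta_lim:
  fixes c :: real
  assumes c: "c > 0"
  shows "((\<lambda>x. ln (exp 1 + x powr c) / ln x) \<longlongrightarrow> c) at_top"
proof -
  have eq: "ln (exp 1 + x powr c) / ln x = c + ln (1 + exp 1 * x powr (-c)) * (1 / ln x)" if "x > 1" for x
  proof -
    have xc: "x powr c > 0" using that by simp
    have "exp 1 + x powr c = x powr c * (1 + exp 1 * x powr (-c))"
      using xc that by (simp add: powr_minus field_simps)
    moreover have "1 + exp 1 * x powr (-c) > 0" by (simp add: add_pos_nonneg)
    ultimately have "ln (exp 1 + x powr c) = c * ln x + ln (1 + exp 1 * x powr (-c))"
      using xc that by (simp add: ln_mult ln_powr)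
    moreover have "ln x > 0" using that by simp
    ultimately show ?thesis by (simp add: field_simps)
  qed
  have p0: "((\<lambda>x::real. x powr (-c)) \<longlongrightarrow> 0) at_top"
    using c by (intro tendsto_neg_powr filterlim_ident) auto
  have l0: "((\<lambda>x. ln (1 + exp 1 * x powr (-c))) \<longlongrightarrow> 0) at_top"
    using tendsto_ln[OF tendsto_add[OF tendsto_const tendsto_mult[OF tendsto_const p0]], of 1 "exp 1"] by simp
  have i0: "((\<lambda>x::real. 1 / ln x) \<longlongrightarrow> 0) at_top" by real_asymp
  have "((\<lambda>x. c + ln (1 + exp 1 * x powr (-c)) * (1 / ln x)) \<longlongrightarrow> c + 0 * 0) at_top"
    by (intro tendsto_intros l0 i0)
  then have "((\<lambda>x. c + ln (1 + exp 1 * x powr (-c)) * (1 / ln x)) \<longlongrightarrow> c) at_top" by simp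
  moreover have "eventually (\<lambda>x. c + ln (1 + exp 1 * x powr (-c)) * (1 / ln x) = ln (exp 1 + x powr c) / ln x) at_top"
    using eventually_gt_at_top[of 1] by eventually_elim (use eq in simp)
  ultimately show ?thesis by (rule Lim_transform_eventually)
qed

context psetup2 begin

lemma rho_nonneg: "rho \<ge> 0"
proof -
  have "q \<bullet> (A *v q) = rho" using eq qq by simp
  moreover have "q \<bullet> (A *v q) \<ge> 0" unfolding quad_form
    using nonneg qpos by (intro sum_nonneg mult_nonneg_nonneg) (auto intro: less_imp_le)
  ultimately show ?thesis by simp
qed

lemma R_formula:
  assumes a: "a > 0"
  shows "matrix_inv (mat 1 - inverse (rho + inverse a) *\<^sub>R A) = (rho + 1 / a) *\<^sub>R (a *\<^sub>R P + W (1 / a))"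
proof (rule inv_unique)
  define t where "t = inverse (rho + inverse a)"
  have pos: "rho + inverse a > 0" using rho_nonneg a by (simp add: add_nonneg_pos)
  have X: "mat 1 - t *\<^sub>R A = t *\<^sub>R (M + (1 / a) *\<^sub>R mat 1)"
  proof -
    have "t *\<^sub>R (M + (1 / a) *\<^sub>R mat 1) = (t * (rho + 1 / a)) *\<^sub>R mat 1 - t *\<^sub>R A"
      by (simp add: M_def scaleR_diff_right scaleR_add_right scaleR_add_left algebra_simps)
    moreover have "t * (rho + 1 / a) = 1" using pos by (simp add: t_def inverse_eq_divide)
    ultimately show ?thesis by simp
  qed
  have res: "(M + (1 / a) *\<^sub>R mat 1) ** (a *\<^sub>R P + W (1 / a)) = mat 1"
    using resolvent[of "1 / a"] a by simp
  show "(mat 1 - inverse (rho + inverse a) *\<^sub>R A) ** ((rho + 1 / a) *\<^sub>R (a *\<^sub>R P + W (1 / a))) = mat 1"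
    unfolding t_def[symmetric] X using res pos
    by (simp add: matrix_scalar_ac scalar_matrix_assoc t_def inverse_eq_divide)
qed

lemma lw_limit:
  assumes sr: "spectral_radius A = rho"
  shows "(long_walk_approx A i j \<longlongrightarrow> (2 / real CARD('n)) *
     ((W 0$i$i / (q$i*q$i) + W 0$j$j / (q$j*q$j)) / 2 - W 0$i$j / (q$i*q$j))) at_top"
proof -
  define G where "G k l a = q$k*q$l + W (1/a) $ k $ l / a" for k l a
  define Lm where "Lm k l = W 0 $ k $ l / (q$k*q$l)" for k l
  define g where "g k l a = ln (G k l a) - ln (q$k*q$l)" for k l a
  define c where "c = 2 / real CARD('n)"
  have c0: "c > 0" by (simp add: c_def)
  have qq0: "q$k*q$l > 0" for k l using qpos by simp
  have Rent: "matrix_inv (mat 1 - inverse (rho + inverse a) *\<^sub>R A) $ k $ l = ((rho + 1/a) * a) * G k l a"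
    if "a > 0" for a k l
    using R_formula[OF that] that by (simp add: G_def P_def field_simps)
  have glim: "((\<lambda>a. a * g k l a) \<longlongrightarrow> Lm k l) at_top" for k l
    unfolding g_def G_def Lm_def by (rule log_lim[OF qq0 W_tendsto])
  have Gpos: "eventually (\<lambda>a. G k l a > 0) at_top" for k l
  proof -
    have "((\<lambda>a::real. 1 / a) \<longlongrightarrow> 0) at_top" by real_asymp
    then have "((\<lambda>a. G k l a) \<longlongrightarrow> q$k*q$l + W 0 $ k $ l * 0) at_top"
      unfolding G_def divide_inverse
      by (intro tendsto_intros W_tendsto[unfolded divide_inverse]) (simp add: inverse_eq_divide)
    then show ?thesis using qq0[of k l] by (simp add: order_tendstoD(1))
  qed
  have flim: "((\<lambda>a. a * ((g i i a + g j j a) / 2 - g i j a)) \<longlongrightarrow> (Lm i i + Lm j j) / 2 - Lm i j) at_top"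
  proof -
    have "((\<lambda>a. ((a * g i i a) + (a * g j j a)) / 2 - a * g i j a) \<longlongrightarrow> (Lm i i + Lm j j) / 2 - Lm i j) at_top"
      by (intro tendsto_intros glim) simp
    then show ?thesis by (simp add: algebra_simps add_divide_distrib)
  qed
  have thl: "((\<lambda>a. ln (exp 1 + a powr c) / ln a) \<longlongrightarrow> c) at_top" by (rule theta_lim[OF c0])
  have one: "((\<lambda>a::real. (a - 1) / a) \<longlongrightarrow> 1) at_top" by real_asymp
  have lim: "((\<lambda>a. (ln (exp 1 + a powr c) / ln a) * ((a - 1) / a) * (a * ((g i i a + g j j a) / 2 - g i j a)))
      \<longlongrightarrow> c * 1 * ((Lm i i + Lm j j) / 2 - Lm i j)) at_top"
    by (intro tendsto_intros thl one flim)
  have ev: "eventually (\<lambda>a. a > 1 \<and> G i i a > 0 \<and> G j j a > 0 \<and> G i j a > 0) at_top"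
    using eventually_gt_at_top[of 1] Gpos[of i i] Gpos[of j j] Gpos[of i j] by eventually_elim auto
  have "eventually (\<lambda>a. (ln (exp 1 + a powr c) / ln a) * ((a - 1) / a) * (a * ((g i i a + g j j a) / 2 - g i j a))
      = long_walk_approx A i j a) at_top"
    using ev
  proof eventually_elim
    case (elim a)
    then have a0: "a > 0" and la: "ln a > 0" by auto
    have rp: "(rho + 1/a) * a > 0" using rho_nonneg a0 by (simp add: add_nonneg_pos)
    have lnR: "ln (matrix_inv (mat 1 - inverse (rho + inverse a) *\<^sub>R A) $ k $ l) = ln ((rho + 1/a) * a) + ln (G k l a)"
      if "G k l a > 0" for k l
      using Rent[OF a0, of k l] ln_mult_pos[OF rp that] by simp
    have lq: "(ln (q$i*q$i) + ln (q$j*q$j)) / 2 - ln (q$i*q$j) = 0"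
      using qpos[of i] qpos[of j] by (simp add: ln_mult)
    have "long_walk_approx A i j a = ln (exp 1 + a powr c) * (a - 1) / ln a *
        ((ln (G i i a) + ln (G j j a)) / 2 - ln (G i j a))"
      unfolding long_walk_approx_def Let_def sr c_def[symmetric]
      using lnR[of i i] lnR[of j j] lnR[of i j] elim by (simp add: algebra_simps add_divide_distrib)
    also have "(ln (G i i a) + ln (G j j a)) / 2 - ln (G i j a) = (g i i a + g j j a) / 2 - g i j a"
      using lq unfolding g_def by (simp add: algebra_simps add_divide_distrib diff_divide_distrib)
    finally have fin: "long_walk_approx A i j a = ln (exp 1 + a powr c) * (a - 1) / ln a * ((g i i a + g j j a) / 2 - g i j a)" .
    have "\<And>X E. E / ln a * ((a - 1) / a) * (a * X) = E * (a - 1) / ln a * X"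
      using a0 la by (simp add: field_simps)
    then show ?case using fin by simp
  qed
  then have "(long_walk_approx A i j \<longlongrightarrow> c * 1 * ((Lm i i + Lm j j) / 2 - Lm i j)) at_top"
    using Lim_transform_eventually[OF lim] by blast
  then show ?thesis by (simp add: c_def Lm_def)
qed

end

lemma mp_unique:
  fixes L X Z :: "real^'n^'n"
  assumes X1: "L ** X ** L = L" and X2: "X ** L ** X = X" and X3: "transpose (L ** X) = L ** X"
    and X4: "transpose (X ** L) = X ** L"
    and Z1: "L ** Z ** L = L" and Z2: "Z ** L ** Z = Z" and Z3: "transpose (L ** Z) = L ** Z"
    and Z4: "transpose (Z ** L) = Z ** L"
  shows "Z = X"
proof -
  have tL1: "transpose L = transpose L ** (L ** Z)"
  proof -
    have "transpose L = transpose (L ** Z ** L)" using Z1 by simp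
    also have "\<dots> = transpose L ** transpose (L ** Z)" by (simp add: matrix_transpose_mul)
    finally show ?thesis using Z3 by simp
  qed
  have "X = X ** (L ** X)" using X2 by (simp add: matrix_mul_assoc)
  also have "\<dots> = X ** transpose (L ** X)" using X3 by simp
  also have "\<dots> = X ** (transpose X ** transpose L)" by (simp add: matrix_transpose_mul)
  also have "\<dots> = X ** (transpose X ** (transpose L ** (L ** Z)))" using tL1 by simp
  also have "\<dots> = X ** (transpose (L ** X) ** (L ** Z))" by (simp add: matrix_transpose_mul matrix_mul_assoc)
  also have "\<dots> = (X ** L ** X) ** L ** Z" using X3 by (simp add: matrix_mul_assoc)
  also have "\<dots> = X ** L ** Z" using X2 by simp
  finally have eX: "X = X ** L ** Z" .
  have tL2: "transpose L = (X ** L) ** transpose L"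
  proof -
    have "transpose L = transpose (L ** X ** L)" using X1 by simp
    also have "\<dots> = transpose (X ** L) ** transpose L" by (simp add: matrix_transpose_mul matrix_mul_assoc)
    finally show ?thesis using X4 by simp
  qed
  have "Z = (Z ** L) ** Z" using Z2 by simp
  also have "\<dots> = transpose (Z ** L) ** Z" using Z4 by simp
  also have "\<dots> = (transpose L ** transpose Z) ** Z" by (simp add: matrix_transpose_mul)
  also have "\<dots> = ((X ** L) ** transpose L ** transpose Z) ** Z" using tL2 by simp
  also have "\<dots> = (X ** L) ** transpose (Z ** L) ** Z" by (simp add: matrix_transpose_mul matrix_mul_assoc)
  also have "\<dots> = X ** L ** (Z ** L ** Z)" using Z4 by (simp add: matrix_mul_assoc)
  also have "\<dots> = X ** L ** Z" using Z2 by simp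
  finally show ?thesis using eX by simp
qed

lemma moore_penrose_eq:
  fixes L X :: "real^'n^'n"
  assumes "L ** X ** L = L" "X ** L ** X = X" "transpose (L ** X) = L ** X" "transpose (X ** L) = X ** L"
  shows "moore_penrose L = X"
  unfolding moore_penrose_def
  by (rule the_equality) (use assms mp_unique in blast)+

lemma mv_axis: "((Y::real^'n^'m) *v axis j 1) $ i = Y $ i $ j"
proof -
  have "(Y *v axis j 1) $ i = (\<Sum>k\<in>UNIV. if k = j then Y $ i $ k else 0)"
    unfolding matrix_vector_mult_def axis_def by (simp add: if_distrib cong: if_cong)
  then show ?thesis by simp
qed

context psetup2 begin

definition "Bs s = (\<chi> k l. (s * q$k) * A$k$l * (s * q$l) :: real^'n^'n)"
definition "Jm = (\<chi> k l. 1 / real CARD('n) :: real^'n^'n)"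
definition "Dq y = (\<chi> m. q$m * y$m :: real^'n)"

lemma Lap_v: "laplacian (Bs s) *v y = (\<chi> k. s^2 * q$k * (M *v Dq y)$k)"
proof -
  have rs: "(\<Sum>m\<in>UNIV. Bs s $k$m) = s^2 * q$k * (rho * q$k)" for k
  proof -
    have "(A *v q)$k = rho * q$k" using eq by simp
    then have "(\<Sum>m\<in>UNIV. A$k$m * q$m) = rho * q$k" by (simp add: matrix_vector_mult_def)
    moreover have "(\<Sum>m\<in>UNIV. Bs s $k$m) = s^2 * q$k * (\<Sum>m\<in>UNIV. A$k$m * q$m)"
      by (simp add: Bs_def sum_distrib_left power2_eq_square mult_ac)
    ultimately show ?thesis by simp
  qed
  have "(laplacian (Bs s) *v y)$k = s^2 * q$k * (M *v Dq y)$k" for k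
  proof -
    have "(laplacian (Bs s) *v y)$k = (\<Sum>l\<in>UNIV. (if k = l then (\<Sum>m\<in>UNIV. Bs s$k$m) else 0) * y$l) - (\<Sum>l\<in>UNIV. Bs s$k$l * y$l)"
      by (simp add: laplacian_def matrix_vector_mult_def left_diff_distrib sum_subtractf)
    also have "(\<Sum>l\<in>UNIV. (if k = l then (\<Sum>m\<in>UNIV. Bs s$k$m) else 0) * y$l) = (\<Sum>m\<in>UNIV. Bs s$k$m) * y$k"
      by (rule trans[OF sum.cong[OF refl, of _ _ "\<lambda>l. if l = k then (\<Sum>m\<in>UNIV. Bs s$k$m) * y$l else 0"]]) auto
    also have "(\<Sum>l\<in>UNIV. Bs s$k$l * y$l) = s^2 * q$k * (A *v Dq y)$k"
      by (simp add: Bs_def Dq_def matrix_vector_mult_def sum_distrib_left power2_eq_square mult_ac)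
    finally show ?thesis using rs by (simp add: Mv Dq_def algebra_simps)
  qed
  then show ?thesis by (simp add: vec_eq_iff)
qed

lemma Jv: "(Jm *v y) $ k = (\<Sum>l\<in>UNIV. y$l) / real CARD('n)"
  by (simp add: Jm_def matrix_vector_mult_def sum_divide_distrib)

lemma JL: "Jm *v (laplacian (Bs s) *v y) = 0"
proof -
  have "(\<Sum>k\<in>UNIV. s^2 * q$k * (M *v Dq y)$k) = s^2 * (q \<bullet> (M *v Dq y))"
    by (simp add: inner_vec_def sum_distrib_left mult_ac)
  then show ?thesis by (simp add: vec_eq_iff Jv Lap_v qM)
qed

lemma LJ: "laplacian (Bs s) *v (Jm *v y) = 0"
proof -
  have "Dq (Jm *v y) = ((\<Sum>l\<in>UNIV. y$l) / real CARD('n)) *\<^sub>R q"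
    by (simp add: Dq_def Jv vec_eq_iff mult.commute)
  then show ?thesis unfolding Lap_v by (simp only: matrix_vector_mult_scaleR Mq) (simp add: vec_eq_iff)
qed

lemma JJ: "Jm *v (Jm *v y) = Jm *v y"
  by (simp add: vec_eq_iff Jv)

lemma symJ: "transpose Jm = Jm"
  by (simp add: Jm_def transpose_def vec_eq_iff)

lemma ker_LJ:
  assumes s: "s > 0" and h: "(laplacian (Bs s) + Jm) *v y = 0"
  shows "y = 0"
proof -
  have h': "laplacian (Bs s) *v y + Jm *v y = 0" using h by (simp add: matrix_vector_mult_add_rdistrib)
  then have "Jm *v (laplacian (Bs s) *v y) + Jm *v (Jm *v y) = 0"
    by (metis matrix_vector_mult_0_right matrix_vector_right_distrib)
  then have Jy: "Jm *v y = 0" using JL JJ by simp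
  then have L0: "laplacian (Bs s) *v y = 0" using h' by simp
  have "(M *v Dq y)$k = 0" for k
  proof -
    have "(laplacian (Bs s) *v y)$k = 0" using L0 by simp
    then have "s^2 * q$k * (M *v Dq y)$k = 0" by (simp add: Lap_v)
    moreover have "s^2 * q$k \<noteq> 0" using s qpos[of k] by simp
    ultimately show ?thesis by simp
  qed
  then have "M *v Dq y = 0" by (simp add: vec_eq_iff)
  then obtain c where c: "Dq y = c *\<^sub>R q" using kerM by blast
  have yc: "y$k = c" for k
    using c qpos[of k] by (simp add: Dq_def vec_eq_iff) (metis mult.commute mult_cancel_left order_less_irrefl)
  have "(Jm *v y)$k = c" for k using yc by (simp add: Jv)
  then have "c = 0" using Jy by (simp add: vec_eq_iff)
  then show ?thesis using yc by (simp add: vec_eq_iff)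
qed

end

context psetup2 begin

lemma resist:
  assumes s: "s > 0"
  shows "resistance_dist (Bs s) i j =
    (1 / s^2) * (W 0$i$i / (q$i*q$i) + W 0$j$j / (q$j*q$j) - 2 * (W 0$i$j / (q$i*q$j)))"
proof -
  define L where "L = laplacian (Bs s)"
  define Y where "Y = matrix_inv (L + Jm)"
  define X where "X = Y - Jm"
  have YY: "(L + Jm) ** Y = mat 1"
    unfolding Y_def L_def using inv_from_ker(1) ker_LJ[OF s] by blast
  have V1: "(L + Jm) *v (Y *v v) = v" "Y *v ((L + Jm) *v v) = v" for v
    using inv_vec[OF YY] by auto
  have JL': "Jm *v (L *v v) = 0" "L *v (Jm *v v) = 0" for v unfolding L_def by (rule JL, rule LJ)
  have JY: "Jm *v (Y *v v) = Jm *v v" for v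
  proof -
    have "Jm *v v = Jm *v ((L + Jm) *v (Y *v v))" using V1 by simp
    also have "\<dots> = Jm *v (Y *v v)"
      by (simp add: matrix_vector_mult_add_rdistrib matrix_vector_right_distrib JL' JJ)
    finally show ?thesis by simp
  qed
  have YJ: "Y *v (Jm *v v) = Jm *v v" for v
  proof -
    have "(L + Jm) *v (Jm *v v) = Jm *v v"
      by (simp add: matrix_vector_mult_add_rdistrib JL' JJ)
    then show ?thesis using V1(2)[of "Jm *v v"] by simp
  qed
  have LY: "L *v (Y *v v) = v - Jm *v v" for v
    using V1(1)[of v] JY[of v] by (simp add: matrix_vector_mult_add_rdistrib algebra_simps)
  have YL: "Y *v (L *v v) = v - Jm *v v" for v
  proof -
    have "L *v v = (L + Jm) *v v - Jm *v v" by (simp add: matrix_vector_mult_add_rdistrib)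
    then show ?thesis using V1(2)[of v] YJ[of v] by (simp add: matrix_vector_right_distrib matrix_vector_mult_diff_distrib)
  qed
  have LX: "L ** X = mat 1 - Jm"
    unfolding matrix_eq_vec
    by (simp add: X_def matrix_vector_mul_assoc[symmetric] matrix_vector_mult_diff_rdistrib
        matrix_vector_mult_diff_distrib LY JL')
  have XL: "X ** L = mat 1 - Jm"
    unfolding matrix_eq_vec
    by (simp add: X_def matrix_vector_mul_assoc[symmetric] matrix_vector_mult_diff_rdistrib YL JL')
  have tI: "transpose (mat 1 - Jm) = mat 1 - Jm"
    using symJ by (simp add: transpose_def vec_eq_iff mat_def)
  have JX: "Jm *v (X *v v) = 0" for v
    by (simp add: X_def matrix_vector_mult_diff_rdistrib matrix_vector_mult_diff_distrib JY JJ)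
  have mp: "moore_penrose L = X"
  proof (rule moore_penrose_eq)
    show "L ** X ** L = L" unfolding LX matrix_eq_vec
      by (simp add: matrix_vector_mul_assoc[symmetric] matrix_vector_mult_diff_rdistrib JL')
    show "X ** L ** X = X" unfolding XL matrix_eq_vec
      by (simp add: matrix_vector_mul_assoc[symmetric] matrix_vector_mult_diff_rdistrib JX)
    show "transpose (L ** X) = L ** X" unfolding LX by (rule tI)
    show "transpose (X ** L) = X ** L" unfolding XL by (rule tI)
  qed
  define z where "z = axis i 1 - axis j (1::real)"
  have Jz: "Jm *v z = 0"
  proof -
    have "(\<Sum>l\<in>UNIV. z$l) = 0" by (simp add: z_def axis_def sum.distrib[symmetric] sum_subtractf)
    then show ?thesis by (simp add: vec_eq_iff Jv)
  qed
  define y where "y = Y *v z"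
  have Jy: "Jm *v y = 0" using JY[of z] Jz by (simp add: y_def)
  have Ly: "L *v y = z" using LY[of z] Jz by (simp add: y_def)
  define x where "x = (\<chi> k. z$k / q$k)"
  have MD: "M *v Dq y = (1 / s^2) *\<^sub>R x"
  proof -
    have "(M *v Dq y)$k = z$k / (s^2 * q$k)" for k
    proof -
      have "s^2 * q$k * (M *v Dq y)$k = z$k" using Ly by (simp add: L_def Lap_v vec_eq_iff)
      moreover have "s^2 * q$k \<noteq> 0" using s qpos[of k] by simp
      ultimately show ?thesis by (simp add: field_simps)
    qed
    then show ?thesis by (simp add: vec_eq_iff x_def)
  qed
  have qx: "q \<bullet> x = 0"
  proof -
    have "q \<bullet> x = (\<Sum>k\<in>UNIV. z$k)"
      unfolding inner_vec_def x_def using qpos by (intro sum.cong) (auto simp: less_imp_neq[symmetric])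
    also have "\<dots> = 0" by (simp add: z_def axis_def sum_subtractf)
    finally show ?thesis .
  qed
  have MH: "M *v (W 0 *v x) = x"
  proof -
    have N0: "N 0 *v (K 0 *v x) = x" using inv_vec(1)[OF NK[of 0]] by simp
    have "W 0 *v x = K 0 *v x" using qx by (simp add: Wv)
    moreover have "N 0 *v v = M *v v + (q \<bullet> v) *\<^sub>R q" for v by (simp add: Nv)
    moreover have "q \<bullet> (K 0 *v x) = 0" using qK[of 0 x] qx by simp
    ultimately show ?thesis using N0 by simp
  qed
  have "M *v (Dq y - (1 / s^2) *\<^sub>R (W 0 *v x)) = 0"
    using MD MH by (simp add: matrix_vector_mult_diff_distrib matrix_vector_mult_scaleR)
  then obtain c where c: "Dq y - (1 / s^2) *\<^sub>R (W 0 *v x) = c *\<^sub>R q" using kerM by blast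
  have zy: "z \<bullet> y = x \<bullet> Dq y"
    unfolding inner_vec_def x_def Dq_def using qpos by (intro sum.cong) (auto simp: less_imp_neq[symmetric])
  also have "\<dots> = x \<bullet> ((1 / s^2) *\<^sub>R (W 0 *v x) + c *\<^sub>R q)"
    using c by (metis diff_add_cancel add.commute)
  also have "\<dots> = (1 / s^2) * (x \<bullet> (W 0 *v x))"
    using qx by (simp add: inner_add_right inner_commute)
  finally have zyv: "z \<bullet> y = (1 / s^2) * (x \<bullet> (W 0 *v x))" .
  have xe: "x = (1 / q$i) *\<^sub>R axis i 1 - (1 / q$j) *\<^sub>R axis j 1"
    by (simp add: x_def z_def vec_eq_iff axis_def)
  have symW: "W 0 $ j $ i = W 0 $ i $ j"
  proof -
    have "transpose (W 0) = W 0" using symK[of 0] symP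
      by (simp add: W_def transpose_def vec_eq_iff)
    then show ?thesis by (metis transpose_def vec_lambda_beta)
  qed
  have xWx: "x \<bullet> (W 0 *v x) = W 0$i$i / (q$i*q$i) + W 0$j$j / (q$j*q$j) - 2 * (W 0$i$j / (q$i*q$j))"
    unfolding xe
    by (simp add: matrix_vector_mult_diff_distrib matrix_vector_mult_scaleR inner_diff_left inner_diff_right
        inner_axis' mv_axis symW algebra_simps)
  have "resistance_dist (Bs s) i j = z \<bullet> (X *v z)"
    by (simp add: resistance_dist_def Let_def z_def L_def[symmetric] mp)
  also have "X *v z = y" using Jz by (simp add: X_def y_def matrix_vector_mult_diff_rdistrib)
  finally show ?thesis using zyv xWx by simp
qed

end

theorem theorem8:
  fixes A :: "real^'n^'n" and i j :: 'n
  assumes "CARD('n) \<ge> 2"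
    and "weighted_adjacency A"
    and "connected_graph A"
  defines "p \<equiv> perron_vector A"
  defines "p' \<equiv> (sqrt (real CARD('n)) / norm p) *\<^sub>R p"
  defines "B \<equiv> (\<chi> k l. p'$k * A$k$l * p'$l)"
  shows "(long_walk_approx A i j \<longlongrightarrow> resistance_dist B i j) at_top \<and>
         long_walk_dist A i j = resistance_dist B i j"
proof -
  interpret psetup A
    using assms(2,3) unfolding weighted_adjacency_def connected_graph_def
    by unfold_locales auto
  obtain r w where wpos: "\<forall>k. w$k > 0" and ew: "A *v w = r *\<^sub>R w"
    and ray: "\<forall>x. x \<bullet> (A *v x) \<le> r * (x \<bullet> x)" and r0: "r \<ge> 0"
    using perron_exists by blast
  have sr: "spectral_radius A = r" using spectral_radius_eq wpos ew ray r0 by blast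
  have pv: "p = (1 / sum (\<lambda>i. w$i) UNIV) *\<^sub>R w"
    unfolding p_def using perron_vector_eq wpos ew ray r0 by blast
  have sw: "sum (\<lambda>i. w$i) UNIV > 0" using wpos by (simp add: sum_pos)
  have ppos: "p$k > 0" for k using pv sw wpos by simp
  have ep: "A *v p = r *\<^sub>R p" using pv ew by (simp add: matrix_vector_mult_scaleR)
  have "p \<noteq> 0" using ppos[of i] by auto
  then have np: "norm p > 0" by simp
  define q where "q = (1 / norm p) *\<^sub>R p"
  have qpos: "q$k > 0" for k using ppos np by (simp add: q_def)
  have eq: "A *v q = r *\<^sub>R q" using ep by (simp add: q_def matrix_vector_mult_scaleR)
  have qq: "q \<bullet> q = 1" using np by (simp add: q_def dot_square_norm power2_eq_square)
  interpret psetup2 A r q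
    using qpos eq qq ray by unfold_locales auto
  define s where "s = sqrt (real CARD('n))"
  have s0: "s > 0" by (simp add: s_def)
  have s2: "s^2 = real CARD('n)" by (simp add: s_def)
  have BB: "B = Bs s"
    unfolding Bs_def by (simp add: B_def p'_def q_def s_def vec_eq_iff mult_ac)
  have res: "resistance_dist B i j = (2 / real CARD('n)) *
     ((W 0$i$i / (q$i*q$i) + W 0$j$j / (q$j*q$j)) / 2 - W 0$i$j / (q$i*q$j))"
    unfolding BB resist[OF s0] s2 by (simp add: field_simps)
  have lim: "(long_walk_approx A i j \<longlongrightarrow> resistance_dist B i j) at_top"
    unfolding res by (rule lw_limit[OF sr])
  moreover have "long_walk_dist A i j = resistance_dist B i j"
    unfolding long_walk_dist_def using lim by (rule tendsto_Lim[rotated]) simp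
  ultimately show ?thesis by blast
qed

end
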